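(* Let $V$ be a JB-algebra and let $a,b$ be projections in $V$ with $\{aba\}=\lambda a$ and $\{bab\}=\mu b$ for some real numbers $\lambda,\mu$. Then $0\le\lambda=\mu\le1$. Moreover $\lambda=0$ if and only if $ab=0$, and $\lambda=1$ if and only if $a=b$.
   Context: Products are the Jordan product of $V$. A projection is an idempotent. The triple product is $\{xyz\}=(xy)z-(zx)y+(yz)x$, so that $\{aba\}=2a(ab)-a^2b$. *)

theory Defs
  imports "HOL-Analysis.Analysis"
begin

definition jb_algebra :: "('a::banach \<Rightarrow> 'a \<Rightarrow> 'a) \<Rightarrow> bool" where
  "jb_algebra m \<longleftrightarrow>
     (\<forall>x y z. m (x + y) z = m x z + m y z) \<and>
     (\<forall>(r::real) x y. m (r *\<^sub>R x) y = r *\<^sub>R m x y) \<and>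
     (\<forall>x y. m x y = m y x) \<and>
     (\<forall>x y. m (m (m x x) y) x = m (m x x) (m y x)) \<and>
     (\<forall>x y. norm (m x y) \<le> norm x * norm y) \<and>
     (\<forall>x. norm (m x x) = (norm x)\<^sup>2) \<and>
     (\<forall>x y. norm (m x x) \<le> norm (m x x + m y y))"

definition jb_projection :: "('a \<Rightarrow> 'a \<Rightarrow> 'a) \<Rightarrow> 'a \<Rightarrow> bool" where
  "jb_projection m p \<longleftrightarrow> m p p = p"

definition jb_triple :: "('a::ab_group_add \<Rightarrow> 'a \<Rightarrow> 'a) \<Rightarrow> 'a \<Rightarrow> 'a \<Rightarrow> 'a \<Rightarrow> 'a" where
  "jb_triple m x y z = m (m x y) z - m (m z x) y + m (m y z) x"

end

theory Submission
  imports Defs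
begin

lemma jb_rules:
  assumes "jb_algebra m"
  shows m_addL: "m (x + y) z = m x z + m y z"
    and m_addR: "m z (x + y) = m z x + m z y"
    and m_scaleL: "m (r *\<^sub>R x) y = r *\<^sub>R m x y"
    and m_scaleR: "m y (r *\<^sub>R x) = r *\<^sub>R m y x"
    and m_comm: "m x y = m y x"
    and m_jordan: "m (m (m x x) y) x = m (m x x) (m y x)"
    and m_sq_norm: "norm (m x x) = (norm x)\<^sup>2"
    and m_sq_le: "norm (m x x) \<le> norm (m x x + m y y)"
  using assms unfolding jb_algebra_def by (auto simp: algebra_simps)

lemma m_minusL: assumes "jb_algebra m" shows "m (- x) y = - m x y"
  using m_scaleL[OF assms, of "-1" x y] by simp

lemma jb_more:
  assumes "jb_algebra m"
  shows m_minusR: "m y (- x) = - m y x"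
    and m_diffL: "m (x - y) z = m x z - m y z"
    and m_diffR: "m z (x - y) = m z x - m z y"
proof -
  note 1 = m_minusL[OF assms]
  show "m y (- x) = - m y x" using m_comm[OF assms, of y "-x"] 1[of x y] m_comm[OF assms, of x y] by simp
  show 2: "m (x - y) z = m x z - m y z"
    using m_addL[OF assms, of x "-y" z] 1 by simp
  have "m z (x - y) = m (x - y) z" by (rule m_comm[OF assms])
  also have "\<dots> = m x z - m y z" by (rule 2)
  also have "\<dots> = m z x - m z y" using m_comm[OF assms, of x z] m_comm[OF assms, of y z] by simp
  finally show "m z (x - y) = m z x - m z y" .
qed

lemma m_zeroR: assumes "jb_algebra m" shows "m x 0 = 0"
  using m_scaleR[OF assms, of x 0 x] by simp

lemma half_comb:
  fixes x y :: "'a::real_vector"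
  shows "(1/2) *\<^sub>R x + (1/2) *\<^sub>R x = x"
    and "(1/2) *\<^sub>R x + ((1/2) *\<^sub>R x + y) = x + y"
  by (simp_all add: scaleR_add_left[symmetric] add.assoc[symmetric])

lemma qq_lemma:
  fixes m :: "'a::real_vector \<Rightarrow> 'a \<Rightarrow> 'a" and lam :: real
  assumes aq: "m a q = (1 - lam) *\<^sub>R a" and bq: "m b q = (1 - lam) *\<^sub>R b"
    and cq: "m c q = (1 - lam) *\<^sub>R c" and q_def: "q = a + b - 2 *\<^sub>R c"
    and lin: "m (a + b - 2 *\<^sub>R c) q = m a q + m b q - 2 *\<^sub>R m c q"
  shows "m q q = (1 - lam) *\<^sub>R q"
proof -
  have e: "(1 - lam) *\<^sub>R (2 *\<^sub>R c) = 2 *\<^sub>R ((1 - lam) *\<^sub>R c)"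
    by (simp add: scaleR_scaleR mult.commute[of "1 - lam"])
  have "m q q = m (a + b - 2 *\<^sub>R c) q" using q_def by simp
  also have "\<dots> = (1 - lam) *\<^sub>R a + (1 - lam) *\<^sub>R b - 2 *\<^sub>R ((1 - lam) *\<^sub>R c)"
    unfolding lin aq bq cq ..
  also have "\<dots> = (1 - lam) *\<^sub>R (a + b - 2 *\<^sub>R c)"
    by (simp only: scaleR_right_diff_distrib scaleR_right_distrib e)
  also have "\<dots> = (1 - lam) *\<^sub>R q" using q_def by simp
  finally show ?thesis .
qed

lemma sq_zero:
  assumes "jb_algebra m" "m x x = 0" shows "x = 0"
  using m_sq_norm[OF assms(1), of x] assms(2) by simp

lemma sq_sum_zero:
  assumes "jb_algebra m" "m x x + m y y = 0" shows "x = 0"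
proof -
  have "norm (m x x) \<le> 0" using m_sq_le[OF assms(1), of x y] assms(2) by simp
  hence "m x x = 0" by simp
  thus ?thesis using sq_zero[OF assms(1)] by blast
qed

lemma jordan_lin:
  assumes J: "jb_algebra m"
  shows "2 *\<^sub>R m (m (m x z) y) x + m (m (m x x) y) z
       = 2 *\<^sub>R m (m x z) (m y x) + m (m x x) (m y z)"
proof -
  note R = m_addL[OF J] m_addR[OF J] m_diffL[OF J] m_diffR[OF J]
  have zx: "m z x = m x z" by (rule m_comm[OF J])
  have e1: "m (m (m (x+z) (x+z)) y) (x+z) = m (m (x+z) (x+z)) (m y (x+z))"
    by (rule m_jordan[OF J])
  have e2: "m (m (m (x-z) (x-z)) y) (x-z) = m (m (x-z) (x-z)) (m y (x-z))"
    by (rule m_jordan[OF J])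
  have e3: "m (m (m x x) y) x = m (m x x) (m y x)" by (rule m_jordan[OF J])
  have e4: "m (m (m z z) y) z = m (m z z) (m y z)" by (rule m_jordan[OF J])
  have sq1: "m (x+z) (x+z) = m x x + 2 *\<^sub>R m x z + m z z"
    unfolding R zx scaleR_2 by (simp add: algebra_simps)
  have sq2: "m (x-z) (x-z) = m x x - 2 *\<^sub>R m x z + m z z"
    unfolding R zx scaleR_2 by (simp add: algebra_simps)
  define X where "X = m x x"
  define Z where "Z = m z z"
  define W where "W = m x z"
  have f1: "m (m X y) x + 2 *\<^sub>R m (m W y) x + m (m Z y) x + m (m X y) z + 2 *\<^sub>R m (m W y) z + m (m Z y) z
     = m X (m y x) + 2 *\<^sub>R m W (m y x) + m Z (m y x) + m X (m y z) + 2 *\<^sub>R m W (m y z) + m Z (m y z)" (is "?l1 = ?r1")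
    using e1 unfolding sq1 X_def[symmetric] Z_def[symmetric] W_def[symmetric]
    by (simp add: R m_scaleL[OF J] m_scaleR[OF J] add.assoc)
  have f2: "m (m X y) x - 2 *\<^sub>R m (m W y) x + m (m Z y) x - m (m X y) z + 2 *\<^sub>R m (m W y) z - m (m Z y) z
     = m X (m y x) - 2 *\<^sub>R m W (m y x) + m Z (m y x) - m X (m y z) + 2 *\<^sub>R m W (m y z) - m Z (m y z)" (is "?l2 = ?r2")
    using e2 unfolding sq2 X_def[symmetric] Z_def[symmetric] W_def[symmetric]
    by (simp add: R m_scaleL[OF J] m_scaleR[OF J] algebra_simps)
  have e4': "m (m Z y) z = m Z (m y z)" using e4 Z_def by simp
  have g1: "?l1 - ?l2 = 2 *\<^sub>R (2 *\<^sub>R m (m W y) x + m (m X y) z) + 2 *\<^sub>R m (m Z y) z"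
    by (simp only: scaleR_2) (simp add: algebra_simps)
  have g2: "?r1 - ?r2 = 2 *\<^sub>R (2 *\<^sub>R m W (m y x) + m X (m y z)) + 2 *\<^sub>R m Z (m y z)"
    by (simp only: scaleR_2) (simp add: algebra_simps)
  have "(2::real) *\<^sub>R (2 *\<^sub>R m (m W y) x + m (m X y) z) = 2 *\<^sub>R (2 *\<^sub>R m W (m y x) + m X (m y z))"
  proof -
    have "?l1 - ?l2 = ?r1 - ?r2" by (simp only: f1 f2)
    hence "2 *\<^sub>R (2 *\<^sub>R m (m W y) x + m (m X y) z) + 2 *\<^sub>R m (m Z y) z
         = 2 *\<^sub>R (2 *\<^sub>R m W (m y x) + m X (m y z)) + 2 *\<^sub>R m Z (m y z)"
      by (simp only: g1 g2)
    hence "2 *\<^sub>R (2 *\<^sub>R m (m W y) x + m (m X y) z) + 2 *\<^sub>R m (m Z y) z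
         = 2 *\<^sub>R (2 *\<^sub>R m W (m y x) + m X (m y z)) + 2 *\<^sub>R m (m Z y) z"
      by (simp only: e4')
    thus ?thesis by (rule add_right_imp_eq)
  qed
  thus ?thesis unfolding X_def W_def by simp
qed

theorem proposition3p1:
  fixes m :: "'a::banach \<Rightarrow> 'a \<Rightarrow> 'a" and a b :: 'a and lam mu :: real
  assumes "jb_algebra m"
    and "jb_projection m a" and "jb_projection m b"
    and "a \<noteq> 0" and "b \<noteq> 0"
    and "jb_triple m a b a = lam *\<^sub>R a"
    and "jb_triple m b a b = mu *\<^sub>R b"
  shows "0 \<le> lam \<and> lam = mu \<and> mu \<le> 1
         \<and> (lam = 0 \<longleftrightarrow> m a b = 0)
         \<and> (lam = 1 \<longleftrightarrow> a = b)"
proof -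
  note J = assms(1)
  note R = m_addL[OF J] m_addR[OF J] m_diffL[OF J] m_diffR[OF J] m_scaleL[OF J] m_scaleR[OF J]
     m_minusL[OF J] m_minusR[OF J]
  have aa: "m a a = a" using assms(2) unfolding jb_projection_def .
  have bb: "m b b = b" using assms(3) unfolding jb_projection_def .
  define c where "c = m a b"
  have ab: "m a b = c" using c_def by simp
  have ba: "m b a = c" using c_def m_comm[OF J, of b a] by simp
  have cac: "m c a = m a c" "m c b = m b c" by (rule m_comm[OF J])+
  have t1: "2 *\<^sub>R m a c - c = lam *\<^sub>R a"
    using assms(6) unfolding jb_triple_def aa ab ba cac scaleR_2 by (simp add: algebra_simps)
  have t2: "2 *\<^sub>R m b c - c = mu *\<^sub>R b"
    using assms(7) unfolding jb_triple_def bb ab ba cac scaleR_2 by (simp add: algebra_simps)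
  have ac: "m a c = (1/2) *\<^sub>R (c + lam *\<^sub>R a)"
  proof -
    have "2 *\<^sub>R m a c = c + lam *\<^sub>R a" using t1 by (simp add: algebra_simps)
    hence "(1/2) *\<^sub>R (2 *\<^sub>R m a c) = (1/2) *\<^sub>R (c + lam *\<^sub>R a)" by (rule arg_cong)
    thus ?thesis by simp
  qed
  have ca: "m c a = (1/2) *\<^sub>R (c + lam *\<^sub>R a)" using ac m_comm[OF J, of c a] by simp
  have bc: "m b c = (1/2) *\<^sub>R (c + mu *\<^sub>R b)"
  proof -
    have "2 *\<^sub>R m b c = c + mu *\<^sub>R b" using t2 by (simp add: algebra_simps)
    hence "(1/2) *\<^sub>R (2 *\<^sub>R m b c) = (1/2) *\<^sub>R (c + mu *\<^sub>R b)" by (rule arg_cong)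
    thus ?thesis by simp
  qed
  have cb: "m c b = (1/2) *\<^sub>R (c + mu *\<^sub>R b)" using bc m_comm[OF J, of c b] by simp
  have l1: "2 *\<^sub>R m (m c b) a + m c b = 2 *\<^sub>R m c c + c"
    using jordan_lin[OF J, of a b b] unfolding aa bb ab ba .
  have l2: "2 *\<^sub>R m (m c a) b + m c a = 2 *\<^sub>R m c c + c"
    using jordan_lin[OF J, of b a a] unfolding aa bb ab ba .
  have cc1: "m c c = (1/2) *\<^sub>R (mu *\<^sub>R c + (lam/2) *\<^sub>R a + (mu/2) *\<^sub>R b)"
  proof -
    have "2 *\<^sub>R m c c = 2 *\<^sub>R m (m c b) a + m c b - c" using l1 by simp
    also have "\<dots> = 2 *\<^sub>R ((1/2) *\<^sub>R (mu *\<^sub>R c + (lam/2) *\<^sub>R a + (mu/2) *\<^sub>R b))"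
      unfolding cb R ca ba by (simp add: algebra_simps half_comb)
    finally show ?thesis by (simp only: scaleR_cancel_left) simp
  qed
  have cc2: "m c c = (1/2) *\<^sub>R (lam *\<^sub>R c + (lam/2) *\<^sub>R a + (mu/2) *\<^sub>R b)"
  proof -
    have "2 *\<^sub>R m c c = 2 *\<^sub>R m (m c a) b + m c a - c" using l2 by simp
    also have "\<dots> = 2 *\<^sub>R ((1/2) *\<^sub>R (lam *\<^sub>R c + (lam/2) *\<^sub>R a + (mu/2) *\<^sub>R b))"
      unfolding ca R cb ab by (simp add: algebra_simps half_comb)
    finally show ?thesis by (simp only: scaleR_cancel_left) simp
  qed
  have c0: "lam = 0" if "c = 0"
  proof -
    have "lam *\<^sub>R a = 0" using t1 that m_zeroR[OF J, of a] by simp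
    thus ?thesis using assms(4) by simp
  qed
  have c0': "mu = 0" if "c = 0"
  proof -
    have "mu *\<^sub>R b = 0" using t2 that m_zeroR[OF J, of b] by simp
    thus ?thesis using assms(5) by simp
  qed
  have "lam = mu \<or> c = 0" using cc1 cc2 by (simp add: algebra_simps)
  hence lm: "lam = mu" using c0 c0' by auto
  have cc: "m c c = (lam/4) *\<^sub>R (a + b + 2 *\<^sub>R c)"
    using cc1 lm by (simp add: algebra_simps)
  have iff0: "lam = 0 \<longleftrightarrow> c = 0"
  proof
    assume "lam = 0" thus "c = 0" using cc sq_zero[OF J, of c] by simp
  qed (rule c0)
  have ab1: "lam = 1" if "a = b"
  proof -
    have "c = a" using that aa c_def by simp
    hence "lam *\<^sub>R a = 1 *\<^sub>R a" using t1 that aa by (simp add: scaleR_2)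
    thus ?thesis using assms(4) by (metis scaleR_cancel_right)
  qed
  define d where "d = a - b"
  define q where "q = a + b - 2 *\<^sub>R c"
  have dd: "m d d = q" unfolding d_def q_def R aa bb ab ba by (simp add: algebra_simps scaleR_2)
  have aq: "m a q = (1 - lam) *\<^sub>R a"
    unfolding q_def m_addR[OF J] m_diffR[OF J] m_scaleR[OF J] aa ab ac by (simp add: algebra_simps)
  have bq: "m b q = (1 - lam) *\<^sub>R b"
    unfolding q_def m_addR[OF J] m_diffR[OF J] m_scaleR[OF J] bb ba bc lm[symmetric] by (simp add: algebra_simps)
  have cq: "m c q = (1 - lam) *\<^sub>R c"
    unfolding q_def m_addR[OF J] m_diffR[OF J] m_scaleR[OF J] ca cb cc lm[symmetric]
    by (simp add: algebra_simps half_comb)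
  have qq: "m q q = (1 - lam) *\<^sub>R q"
    by (rule qq_lemma[of m a q lam b c, OF aq bq cq q_def])
       (simp only: m_addL[OF J] m_diffL[OF J] m_scaleL[OF J])
  have ba1: "a = b" if "lam = 1"
  proof -
    have "q = 0" using qq that sq_zero[OF J, of q] by simp
    hence "d = 0" using dd sq_zero[OF J, of d] by simp
    thus ?thesis unfolding d_def by simp
  qed
  have le1: "lam \<le> 1"
  proof (rule ccontr)
    assume "\<not> lam \<le> 1"
    hence h: "lam - 1 > 0" by simp
    define y where "y = sqrt (lam - 1) *\<^sub>R d"
    have my: "m y y = (lam - 1) *\<^sub>R q" unfolding y_def R dd using h by simp
    have "m q q + m y y = (1 - lam) *\<^sub>R q + (lam - 1) *\<^sub>R q" unfolding qq my ..
    also have "\<dots> = ((1 - lam) + (lam - 1)) *\<^sub>R q" by (rule scaleR_add_left[symmetric])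
    also have "\<dots> = 0" by simp
    finally have "m q q + m y y = 0" .
    hence "q = 0" using sq_sum_zero[OF J] by blast
    hence "d = 0" using dd sq_zero[OF J, of d] by simp
    hence "lam = 1" using ab1 d_def by simp
    thus False using h by simp
  qed
  have ge0: "0 \<le> lam"
  proof (rule ccontr)
    assume "\<not> 0 \<le> lam"
    hence h: "- lam / 4 > 0" by simp
    define s where "s = a + b"
    have ss: "m s s = a + b + 2 *\<^sub>R c" unfolding s_def R aa bb ab ba by (simp add: algebra_simps scaleR_2)
    define y where "y = sqrt (- lam / 4) *\<^sub>R s"
    have my: "m y y = (- lam / 4) *\<^sub>R (a + b + 2 *\<^sub>R c)" unfolding y_def R ss using h by simp
    have "m c c + m y y = (lam/4) *\<^sub>R (a + b + 2 *\<^sub>R c) + (- lam / 4) *\<^sub>R (a + b + 2 *\<^sub>R c)" unfolding cc my ..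
    also have "\<dots> = ((lam/4) + (- lam / 4)) *\<^sub>R (a + b + 2 *\<^sub>R c)" by (rule scaleR_add_left[symmetric])
    also have "\<dots> = 0" by simp
    finally have "m c c + m y y = 0" .
    hence "c = 0" using sq_sum_zero[OF J] by blast
    hence "lam = 0" using c0 by simp
    thus False using h by simp
  qed
  show ?thesis
  proof (intro conjI)
    show "0 \<le> lam" by (rule ge0)
    show "lam = mu" by (rule lm)
    show "mu \<le> 1" using le1 lm by simp
    show "lam = 0 \<longleftrightarrow> m a b = 0" unfolding ab by (rule iff0)
    show "lam = 1 \<longleftrightarrow> a = b" using ab1 ba1 by blast
  qed
qed

end
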